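(* Let $\gamma>0$ and let $H$ be a $3$-graph of order $n$ with $\delta_2(H)\ge(1/2-\gamma)n$. Suppose $X,Y$ is a bipartition of $V(H)$ and $\{x,x',y,y'\}$ spans a copy of $K_4^3$ in $H$ with $x,x'\in X$ and $y,y'\in Y$. Then at least one of the following holds: (a) $\{x,x',y,y'\}$ is contained in at least $\gamma n/4$ $5$-sets that span $(X,Y)$-bridges of length $1$; (b) $(1/2-4\gamma)n\le|X|,|Y|\le(1/2+4\gamma)n$ and $xx'y$ is $(9\gamma,X,Y)$-typical.
   Context: $\delta_2(H)$ is the minimum over pairs of distinct vertices of the number of edges containing the pair. $K_4^3$ is the complete $3$-graph on $4$ vertices; $K_4^-$ is the $3$-graph with $4$ vertices and $3$ edges. A set $S$ is an $(x,y)$-connector of length $1$ if $S\cap\{x,y\}=\emptyset$, $|S|=3$, and both $S\cup\{x\}$ and $S\cup\{y\}$ span copies of $K_4^-$ in $H$. A triple $(x_0,y_0,S)$ is an $(X,Y)$-bridge of length $1$ if $x_0\in X$, $y_0\in Y$ and $S$ is an $(x_0,y_0)$-connector of length $1$; a $5$-set $Z$ spans an $(X,Y)$-bridge of length $1$ if $Z=S\cup\{x_0,y_0\}$ for some such bridge. Write $N(uv)$ for the set of vertices $w$ with $uvw\in E(H)$, $N(uv,Z)=N(uv)\cap Z$ and $\deg(uv,Z)=|N(uv,Z)|$. For $\rho>0$, a triple $xx'y$ with $x,x'\in X$, $y\in Y$ is $(\rho,X,Y)$-typical if (T1) $\deg(xx',Y)\ge|Y|-\rho n$, (T2) $|N(xy,X)\cap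 N(x'y,X)|\le\rho n$, and (T3) $|X|-\rho n\le\deg(xy,X)+\deg(x'y,X)$. *)

theory Defs
  imports Complex_Main
begin

definition three_graph :: "'a set \<Rightarrow> 'a set set \<Rightarrow> bool" where
  "three_graph V E \<longleftrightarrow> finite V \<and> (\<forall>e\<in>E. e \<subseteq> V \<and> card e = 3)"

definition nbhd :: "'a set \<Rightarrow> 'a set set \<Rightarrow> 'a \<Rightarrow> 'a \<Rightarrow> 'a set" where
  "nbhd V E u v = {w \<in> V. {u, v, w} \<in> E}"

definition deg_in :: "'a set \<Rightarrow> 'a set set \<Rightarrow> 'a \<Rightarrow> 'a \<Rightarrow> 'a set \<Rightarrow> nat" where
  "deg_in V E u v Z = card (nbhd V E u v \<inter> Z)"

definition min_codeg_ge :: "'a set \<Rightarrow> 'a set set \<Rightarrow> real \<Rightarrow> bool" where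
  "min_codeg_ge V E d \<longleftrightarrow> (\<forall>u\<in>V. \<forall>v\<in>V. u \<noteq> v \<longrightarrow> real (card (nbhd V E u v)) \<ge> d)"

definition spans_K4 :: "'a set set \<Rightarrow> 'a set \<Rightarrow> bool" where
  "spans_K4 E T \<longleftrightarrow> card T = 4 \<and> (\<forall>e. e \<subseteq> T \<and> card e = 3 \<longrightarrow> e \<in> E)"

definition spans_K4minus :: "'a set set \<Rightarrow> 'a set \<Rightarrow> bool" where
  "spans_K4minus E T \<longleftrightarrow> card T = 4 \<and> card {e \<in> E. e \<subseteq> T} \<ge> 3"

definition connector1 :: "'a set \<Rightarrow> 'a set set \<Rightarrow> 'a \<Rightarrow> 'a \<Rightarrow> 'a set \<Rightarrow> bool" where
  "connector1 V E x y S \<longleftrightarrow> S \<subseteq> V \<and> S \<inter> {x, y} = {} \<and> card S = 3 \<and>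
     spans_K4minus E (insert x S) \<and> spans_K4minus E (insert y S)"

definition bridge1 :: "'a set \<Rightarrow> 'a set set \<Rightarrow> 'a set \<Rightarrow> 'a set \<Rightarrow> 'a \<Rightarrow> 'a \<Rightarrow> 'a set \<Rightarrow> bool" where
  "bridge1 V E X Y x0 y0 S \<longleftrightarrow> x0 \<in> X \<and> y0 \<in> Y \<and> connector1 V E x0 y0 S"

definition spans_bridge1 :: "'a set \<Rightarrow> 'a set set \<Rightarrow> 'a set \<Rightarrow> 'a set \<Rightarrow> 'a set \<Rightarrow> bool" where
  "spans_bridge1 V E X Y Z \<longleftrightarrow> card Z = 5 \<and>
     (\<exists>x0 y0 S. bridge1 V E X Y x0 y0 S \<and> Z = S \<union> {x0, y0})"

definition typical :: "'a set \<Rightarrow> 'a set set \<Rightarrow> real \<Rightarrow> 'a set \<Rightarrow> 'a set \<Rightarrow> 'a \<Rightarrow> 'a \<Rightarrow> 'a \<Rightarrow> bool" where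
  "typical V E \<rho> X Y x x' y \<longleftrightarrow>
     x \<in> X \<and> x' \<in> X \<and> y \<in> Y \<and>
     real (deg_in V E x x' Y) \<ge> real (card Y) - \<rho> * real (card V) \<and>
     real (card (nbhd V E x y \<inter> X \<inter> (nbhd V E x' y \<inter> X))) \<le> \<rho> * real (card V) \<and>
     real (card X) - \<rho> * real (card V) \<le> real (deg_in V E x y X) + real (deg_in V E x' y X)"

end

theory Submission
  imports Defs
begin


definition two :: "bool \<Rightarrow> bool \<Rightarrow> bool \<Rightarrow> bool" where
  "two a b c \<longleftrightarrow> (a \<and> b) \<or> (a \<and> c) \<or> (b \<and> c)"

lemma sumind:
  assumes "finite V" "A \<subseteq> V"
  shows "(\<Sum>v\<in>V. if v \<in> A then (1::real) else 0) = real (card A)"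
proof -
  have "(\<Sum>v\<in>V. if v \<in> A then (1::real) else 0) = (\<Sum>v\<in>V \<inter> A. 1)"
    using assms(1) by (simp add: sum.inter_filter[symmetric] Int_def)
  also have "V \<inter> A = A" using assms(2) by blast
  finally show ?thesis by simp
qed

lemma K4m:
  assumes "card T = 4" "a \<in> E" "b \<in> E" "c \<in> E" "a \<subseteq> T" "b \<subseteq> T" "c \<subseteq> T"
    "a \<noteq> b" "a \<noteq> c" "b \<noteq> c"
  shows "spans_K4minus E T"
proof -
  have fT: "finite T" using assms(1) by (metis card.infinite zero_neq_numeral)
  have "{a,b,c} \<subseteq> {e\<in>E. e \<subseteq> T}" using assms by auto
  moreover have "finite {e\<in>E. e \<subseteq> T}"
    by (rule finite_subset[of _ "Pow T"]) (use fT in auto)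
  ultimately have "card {a,b,c} \<le> card {e\<in>E. e \<subseteq> T}" by (rule card_mono[rotated])
  moreover have "card {a,b,c} = 3" using assms by simp
  ultimately show ?thesis using assms(1) by (simp add: spans_K4minus_def)
qed

lemma K4_K4m:
  assumes "spans_K4 E T" shows "spans_K4minus E T"
proof -
  have c4: "card T = 4" using assms by (simp add: spans_K4_def)
  have fT: "finite T" using c4 by (metis card.infinite zero_neq_numeral)
  have "{B. B \<subseteq> T \<and> card B = 3} \<subseteq> {e\<in>E. e \<subseteq> T}" using assms by (auto simp: spans_K4_def)
  moreover have "finite {e\<in>E. e \<subseteq> T}"
    by (rule finite_subset[of _ "Pow T"]) (use fT in auto)
  ultimately have "card {B. B \<subseteq> T \<and> card B = 3} \<le> card {e\<in>E. e \<subseteq> T}" by (rule card_mono[rotated])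
  moreover have "card {B. B \<subseteq> T \<and> card B = 3} = 4" using n_subsets[OF fT, of 3] c4 by (simp add: numeral_eq_Suc)
  ultimately show ?thesis using c4 by (simp add: spans_K4minus_def)
qed

lemma two_K4m:
  assumes "distinct [v,a,b,c]" "{a,b,c} \<in> E"
    "two (v \<in> nbhd V E a b) (v \<in> nbhd V E a c) (v \<in> nbhd V E b c)"
  shows "spans_K4minus E (insert v {a,b,c})"
proof -
  have c4: "card (insert v {a,b,c}) = 4" using assms(1) by simp
  from assms(3) consider "{a,b,v} \<in> E" "{a,c,v} \<in> E" | "{a,b,v} \<in> E" "{b,c,v} \<in> E"
     | "{a,c,v} \<in> E" "{b,c,v} \<in> E"
    by (auto simp: two_def nbhd_def)
  then show ?thesis
  proof cases
    case 1 show ?thesis by (rule K4m[OF c4 assms(2) 1]) (use assms(1) in auto)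
  next
    case 2 show ?thesis by (rule K4m[OF c4 assms(2) 2]) (use assms(1) in auto)
  next
    case 3 show ?thesis by (rule K4m[OF c4 assms(2) 3]) (use assms(1) in auto)
  qed
qed

lemma bridge_lem:
  assumes "x0 \<in> X" "y0 \<in> Y" "X \<inter> Y = {}" "S \<subseteq> V" "card S = 3" "x0 \<notin> S" "y0 \<notin> S"
    "spans_K4minus E (insert x0 S)" "spans_K4minus E (insert y0 S)"
  shows "spans_bridge1 V E X Y (S \<union> {x0,y0})"
proof -
  have "x0 \<noteq> y0" using assms by blast
  have fS: "finite S" using assms(5) by (metis card.infinite zero_neq_numeral)
  have "card (S \<union> {x0,y0}) = 5" using assms `x0 \<noteq> y0` fS by (simp add: card_insert_if)
  moreover have "bridge1 V E X Y x0 y0 S"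
    using assms by (auto simp: bridge1_def connector1_def)
  ultimately show ?thesis by (auto simp: spans_bridge1_def)
qed

lemma notin_nb: assumes "three_graph V E" shows "u \<notin> nbhd V E u v" "v \<notin> nbhd V E u v"
proof -
  have "card {u,v} \<noteq> 3" by (simp add: card_insert_if)
  then show "u \<notin> nbhd V E u v" "v \<notin> nbhd V E u v" using assms
    by (auto simp: three_graph_def nbhd_def insert_commute)
qed

lemma in_nb: assumes "spans_K4 E T" "{u,v,w} \<subseteq> T" "distinct [u,v,w]" "w \<in> V"
  shows "w \<in> nbhd V E u v"
  using assms by (auto simp: spans_K4_def nbhd_def)


lemma pw:
  fixes a1 a2 a3 a4 a5 a6 inX inY g :: bool
  assumes hg: "g \<longleftrightarrow> (inX \<and> (two a1 a5 a6 \<or> two a1 a3 a4)) \<or> (inY \<and> (two a2 a4 a6 \<or> two a2 a3 a5))"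
    and hXY: "inX \<longleftrightarrow> \<not> inY"
  shows "2*of_bool a1 + of_bool a3 + of_bool a4 + of_bool a5 + of_bool a6 \<le> (2::real) + 2*of_bool inY + 4*of_bool g"
    and "2*of_bool a2 + of_bool a3 + of_bool a4 + of_bool a5 + of_bool a6 \<le> (2::real) + 2*of_bool inX + 4*of_bool g"
    and "of_bool a1 + of_bool a2 + of_bool a3 + of_bool a4 + of_bool a5 + of_bool a6 \<le> (3::real) + 3*of_bool g
           - of_bool (inX \<and> \<not> g \<and> \<not> a3 \<and> \<not> a4) - of_bool (inY \<and> \<not> g \<and> \<not> a1)"
  using assms by (cases a1; cases a2; cases a3; cases a4; cases a5; cases a6; cases inX; auto simp: two_def)+


lemma sumind2: "finite V \<Longrightarrow> A \<subseteq> V \<Longrightarrow> (\<Sum>v\<in>V. of_bool (v \<in> A)) = real (card A)"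
  using sumind[of V A] by (simp add: of_bool_def)

theorem lemma5p10:
  fixes V :: "'a set" and E :: "'a set set" and X Y :: "'a set"
    and x x' y y' :: 'a and \<gamma> :: real and n :: nat
  assumes "\<gamma> > 0"
    and "three_graph V E"
    and "n = card V"
    and "min_codeg_ge V E ((1/2 - \<gamma>) * real n)"
    and "X \<union> Y = V" and "X \<inter> Y = {}"
    and "x \<in> X" and "x' \<in> X" and "y \<in> Y" and "y' \<in> Y"
    and "spans_K4 E {x, x', y, y'}"
  shows "real (card {Z. {x, x', y, y'} \<subseteq> Z \<and> spans_bridge1 V E X Y Z}) \<ge> \<gamma> * real n / 4
     \<or> ((1/2 - 4*\<gamma>) * real n \<le> real (card X) \<and> real (card X) \<le> (1/2 + 4*\<gamma>) * real n \<and>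
        (1/2 - 4*\<gamma>) * real n \<le> real (card Y) \<and> real (card Y) \<le> (1/2 + 4*\<gamma>) * real n \<and>
        typical V E (9*\<gamma>) X Y x x' y)"
proof -
  note gp = assms(1) and tg = assms(2) and nV = assms(3) and cod = assms(4)
    and XY = assms(5) and dXY = assms(6) and xX = assms(7) and x'X = assms(8)
    and yY = assms(9) and y'Y = assms(10) and K4 = assms(11)
  have finV: "finite V" using tg by (simp add: three_graph_def)
  have finX: "finite X" "finite Y" using finV XY by (auto intro: finite_subset)
  have c4: "card {x,x',y,y'} = 4" using K4 by (simp add: spans_K4_def)
  have xy: "x \<noteq> y" "x \<noteq> y'" "x' \<noteq> y" "x' \<noteq> y'" using xX x'X yY y'Y dXY by auto
  have xx': "x \<noteq> x'"
  proof
    assume "x = x'" then have "card {x,x',y,y'} \<le> 3"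
      by (simp add: card_insert_if)
    with c4 show False by simp
  qed
  have yy': "y \<noteq> y'"
  proof
    assume "y = y'" then have "card {x,x',y,y'} \<le> 3"
      by (simp add: card_insert_if)
    with c4 show False by simp
  qed
  have inV: "x \<in> V" "x' \<in> V" "y \<in> V" "y' \<in> V" using XY xX x'X yY y'Y by auto
  define K where "K = {x,x',y,y'}"
  define N1 where "N1 = nbhd V E x x'"
  define N2 where "N2 = nbhd V E y y'"
  define N3 where "N3 = nbhd V E x y"
  define N4 where "N4 = nbhd V E x' y"
  define N5 where "N5 = nbhd V E x y'"
  define N6 where "N6 = nbhd V E x' y'"
  define G where "G = {v \<in> V - K. (v\<in>X \<and> (two (v\<in>N1) (v\<in>N5) (v\<in>N6) \<or> two (v\<in>N1) (v\<in>N3) (v\<in>N4)))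
        \<or> (v\<in>Y \<and> (two (v\<in>N2) (v\<in>N4) (v\<in>N6) \<or> two (v\<in>N2) (v\<in>N3) (v\<in>N5)))}"
  define RX where "RX = {v\<in>V-K. v\<in>X \<and> v\<notin>G \<and> v\<notin>N3 \<and> v\<notin>N4}"
  define RY where "RY = {v\<in>V-K. v\<in>Y \<and> v\<notin>G \<and> v\<notin>N1}"
  define Zs where "Zs = {Z. {x,x',y,y'} \<subseteq> Z \<and> spans_bridge1 V E X Y Z}"
  have Nsub: "N1 \<subseteq> V" "N2 \<subseteq> V" "N3 \<subseteq> V" "N4 \<subseteq> V" "N5 \<subseteq> V" "N6 \<subseteq> V"
    by (auto simp: N1_def N2_def N3_def N4_def N5_def N6_def nbhd_def)
  have GV: "G \<subseteq> V" "RX \<subseteq> V" "RY \<subseteq> V" by (auto simp: G_def RX_def RY_def)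
  have E: "{x,x',y} \<in> E" "{x,x',y'} \<in> E" "{x,y,y'} \<in> E" "{x',y,y'} \<in> E"
    using K4 xy xx' yy' by (auto simp: spans_K4_def)
  have K4': "spans_K4minus E {x,x',y,y'}" by (rule K4_K4m[OF K4])
  have nb: "\<And>u v w. {u,v,w} \<in> E \<Longrightarrow> w \<in> V \<Longrightarrow> w \<in> nbhd V E u v"
    by (simp add: nbhd_def)
  have e2: "{x,y,x'} \<in> E" "{x,y',x'} \<in> E" "{x',y,x} \<in> E" "{x',y',x} \<in> E"
     "{x,x',y} \<in> E" "{x,y',y} \<in> E" "{x',y,y'} \<in> E" "{x,y,y'} \<in> E" "{x',x,y'} \<in> E" "{x,x',y'} \<in> E" "{x',y',y} \<in> E" "{y,y',x} \<in> E" "{y,y',x'} \<in> E" "{x',x,y} \<in> E"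
    using E by (simp_all add: insert_commute)
  have mem: "x \<notin> N1" "x' \<notin> N1" "y \<in> N1" "y' \<in> N1"
     "x \<in> N2" "x' \<in> N2" "y \<notin> N2" "y' \<notin> N2"
     "x \<notin> N3" "x' \<in> N3" "y \<notin> N3" "y' \<in> N3"
     "x \<in> N4" "x' \<notin> N4" "y \<notin> N4" "y' \<in> N4"
     "x \<notin> N5" "x' \<in> N5" "y \<in> N5" "y' \<notin> N5"
     "x \<in> N6" "x' \<notin> N6" "y \<in> N6" "y' \<notin> N6"
    unfolding N1_def N2_def N3_def N4_def N5_def N6_def
    using notin_nb[OF tg] nb[OF e2(5) inV(3)] nb[OF e2(10) inV(4)] nb[OF e2(12) inV(1)] nb[OF e2(13) inV(2)]
      nb[OF e2(1) inV(2)] nb[OF e2(8) inV(4)] nb[OF e2(3) inV(1)] nb[OF e2(7) inV(4)]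
      nb[OF e2(2) inV(2)] nb[OF e2(6) inV(3)] nb[OF e2(4) inV(1)] nb[OF e2(11) inV(3)]
    by blast+
  have bridge: "insert v K \<in> Zs" if vG: "v \<in> G" for v
  proof -
    have vV: "v \<in> V" and vK: "v \<notin> K" using vG by (auto simp: G_def)
    have vd: "v \<noteq> x" "v \<noteq> x'" "v \<noteq> y" "v \<noteq> y'" using vK by (auto simp: K_def)
    have sb: "spans_bridge1 V E X Y (insert v K)"
    proof -
      from vG consider "v \<in> X" "two (v\<in>N1) (v\<in>N5) (v\<in>N6)" | "v \<in> X" "two (v\<in>N1) (v\<in>N3) (v\<in>N4)"
        | "v \<in> Y" "two (v\<in>N2) (v\<in>N4) (v\<in>N6)" | "v \<in> Y" "two (v\<in>N2) (v\<in>N3) (v\<in>N5)"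
        by (auto simp: G_def)
      then show ?thesis
      proof cases
        case 1
        have a: "spans_K4minus E (insert v {x,x',y'})"
          by (rule two_K4m[where V=V]) (use 1 vd xy xx' yy' E in \<open>auto simp: two_def N1_def N5_def N6_def\<close>)
        have b: "spans_K4minus E (insert y {x,x',y'})"
          using K4' by (simp add: insert_commute)
        have "spans_bridge1 V E X Y ({x,x',y'} \<union> {v,y})"
          by (rule bridge_lem[OF 1(1) yY dXY _ _ _ _ a b]) (use inV vd xy xx' yy' in auto)
        moreover have "{x,x',y'} \<union> {v,y} = insert v K" by (auto simp: K_def)
        ultimately show ?thesis by simp
      next
        case 2
        have a: "spans_K4minus E (insert v {x,x',y})"
          by (rule two_K4m[where V=V]) (use 2 vd xy xx' yy' E in \<open>auto simp: two_def N1_def N3_def N4_def\<close>)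
        have b: "spans_K4minus E (insert y' {x,x',y})"
          using K4' by (simp add: insert_commute)
        have "spans_bridge1 V E X Y ({x,x',y} \<union> {v,y'})"
          by (rule bridge_lem[OF 2(1) y'Y dXY _ _ _ _ a b]) (use inV vd xy xx' yy' in auto)
        moreover have "{x,x',y} \<union> {v,y'} = insert v K" by (auto simp: K_def)
        ultimately show ?thesis by simp
      next
        case 3
        have a: "spans_K4minus E (insert v {x',y,y'})"
          by (rule two_K4m[where V=V]) (use 3 vd xy xx' yy' E in \<open>auto simp: two_def N2_def N4_def N6_def\<close>)
        have b: "spans_K4minus E (insert x {x',y,y'})"
          using K4' by (simp add: insert_commute)
        have "spans_bridge1 V E X Y ({x',y,y'} \<union> {x,v})"
          by (rule bridge_lem[OF xX 3(1) dXY _ _ _ _ b a]) (use inV vd xy xx' yy' in auto)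
        moreover have "{x',y,y'} \<union> {x,v} = insert v K" by (auto simp: K_def)
        ultimately show ?thesis by simp
      next
        case 4
        have a: "spans_K4minus E (insert v {x,y,y'})"
          by (rule two_K4m[where V=V]) (use 4 vd xy xx' yy' E in \<open>auto simp: two_def N2_def N3_def N5_def\<close>)
        have b: "spans_K4minus E (insert x' {x,y,y'})"
          using K4' by (simp add: insert_commute)
        have "spans_bridge1 V E X Y ({x,y,y'} \<union> {x',v})"
          by (rule bridge_lem[OF x'X 4(1) dXY _ _ _ _ b a]) (use inV vd xy xx' yy' in auto)
        moreover have "{x,y,y'} \<union> {x',v} = insert v K" by (auto simp: K_def)
        ultimately show ?thesis by simp
      qed
    qed
    then show ?thesis by (auto simp: Zs_def K_def)
  qed
  have finZs: "finite Zs"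
  proof (rule finite_subset[of _ "Pow V"])
    show "Zs \<subseteq> Pow V"
      using XY by (auto simp: Zs_def spans_bridge1_def bridge1_def connector1_def)
  qed (use finV in auto)
  have cardG: "card G \<le> card Zs"
  proof -
    have "inj_on (\<lambda>v. insert v K) G"
      by (rule inj_onI) (auto simp: G_def)
    then show ?thesis using card_inj_on_le[of "\<lambda>v. insert v K" G Zs] bridge finZs by auto
  qed
  have hn: "(1/2-\<gamma>)*real n = real n/2 - \<gamma>*real n" by (simp add: algebra_simps)
  have deg: "real n/2 - \<gamma>*real n \<le> real (card (nbhd V E u w))" if "u \<in> V" "w \<in> V" "u \<noteq> w" for u w
    using cod that hn by (auto simp: min_codeg_ge_def)
  have d: "real n/2 - \<gamma>*real n \<le> real (card N1)" "real n/2 - \<gamma>*real n \<le> real (card N2)"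
    "real n/2 - \<gamma>*real n \<le> real (card N3)" "real n/2 - \<gamma>*real n \<le> real (card N4)"
    "real n/2 - \<gamma>*real n \<le> real (card N5)" "real n/2 - \<gamma>*real n \<le> real (card N6)"
    unfolding N1_def N2_def N3_def N4_def N5_def N6_def
    using deg inV xy xx' yy' by auto
  have XYV: "X \<subseteq> V" "Y \<subseteq> V" using XY by auto
  note si = sumind2[OF finV Nsub(1)] sumind2[OF finV Nsub(2)] sumind2[OF finV Nsub(3)]
    sumind2[OF finV Nsub(4)] sumind2[OF finV Nsub(5)] sumind2[OF finV Nsub(6)]
    sumind2[OF finV GV(1)] sumind2[OF finV GV(2)] sumind2[OF finV GV(3)]
    sumind2[OF finV XYV(1)] sumind2[OF finV XYV(2)]
  have pt: "2*of_bool (v\<in>N1) + of_bool (v\<in>N3) + of_bool (v\<in>N4) + of_bool (v\<in>N5) + of_bool (v\<in>N6)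
             \<le> (2::real) + 2*of_bool (v\<in>Y) + 4*of_bool (v\<in>G)
         \<and> 2*of_bool (v\<in>N2) + of_bool (v\<in>N3) + of_bool (v\<in>N4) + of_bool (v\<in>N5) + of_bool (v\<in>N6)
             \<le> (2::real) + 2*of_bool (v\<in>X) + 4*of_bool (v\<in>G)
         \<and> of_bool (v\<in>N1) + of_bool (v\<in>N2) + of_bool (v\<in>N3) + of_bool (v\<in>N4) + of_bool (v\<in>N5) + of_bool (v\<in>N6)
             \<le> (3::real) + 3*of_bool (v\<in>G) - of_bool (v\<in>RX) - of_bool (v\<in>RY)"
    if vV: "v \<in> V" for v
  proof (cases "v \<in> K")
    case True
    then have nG: "v \<notin> G" "v \<notin> RX" "v \<notin> RY" by (auto simp: G_def RX_def RY_def)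
    have xn: "x \<notin> Y" "x' \<notin> Y" "y \<notin> X" "y' \<notin> X" using xX x'X yY y'Y dXY by auto
    from True have "v = x \<or> v = x' \<or> v = y \<or> v = y'" by (auto simp: K_def)
    then show ?thesis using nG mem xn xX x'X yY y'Y by auto
  next
    case False
    have hg: "v\<in>G \<longleftrightarrow> (v\<in>X \<and> (two (v\<in>N1) (v\<in>N5) (v\<in>N6) \<or> two (v\<in>N1) (v\<in>N3) (v\<in>N4)))
        \<or> (v\<in>Y \<and> (two (v\<in>N2) (v\<in>N4) (v\<in>N6) \<or> two (v\<in>N2) (v\<in>N3) (v\<in>N5)))"
      using vV False by (simp add: G_def)
    have hXY: "v\<in>X \<longleftrightarrow> \<not> v\<in>Y" using vV XY dXY by auto
    have rx: "v\<in>RX \<longleftrightarrow> (v\<in>X \<and> \<not> v\<in>G \<and> \<not> v\<in>N3 \<and> \<not> v\<in>N4)" using vV False by (simp add: RX_def)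
    have ry: "v\<in>RY \<longleftrightarrow> (v\<in>Y \<and> \<not> v\<in>G \<and> \<not> v\<in>N1)" using vV False by (simp add: RY_def)
    show ?thesis unfolding rx ry using pw[OF hg hXY] by blast
  qed
  have S1: "2*real (card N1) + real (card N3) + real (card N4) + real (card N5) + real (card N6)
      \<le> 2*real n + 2*real (card Y) + 4*real (card G)"
  proof -
    have "(\<Sum>v\<in>V. 2*of_bool (v\<in>N1) + of_bool (v\<in>N3) + of_bool (v\<in>N4) + of_bool (v\<in>N5) + of_bool (v\<in>N6))
        \<le> (\<Sum>v\<in>V. (2::real) + 2*of_bool (v\<in>Y) + 4*of_bool (v\<in>G))"
      by (rule sum_mono) (use pt in blast)
    then show ?thesis by (simp add: sum.distrib sum_distrib_left[symmetric] si nV)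
  qed
  have S2: "2*real (card N2) + real (card N3) + real (card N4) + real (card N5) + real (card N6)
      \<le> 2*real n + 2*real (card X) + 4*real (card G)"
  proof -
    have "(\<Sum>v\<in>V. 2*of_bool (v\<in>N2) + of_bool (v\<in>N3) + of_bool (v\<in>N4) + of_bool (v\<in>N5) + of_bool (v\<in>N6))
        \<le> (\<Sum>v\<in>V. (2::real) + 2*of_bool (v\<in>X) + 4*of_bool (v\<in>G))"
      by (rule sum_mono) (use pt in blast)
    then show ?thesis by (simp add: sum.distrib sum_distrib_left[symmetric] si nV)
  qed
  have S3: "real (card N1) + real (card N2) + real (card N3) + real (card N4) + real (card N5) + real (card N6)
      \<le> 3*real n + 3*real (card G) - real (card RX) - real (card RY)"
  proof -
    have "(\<Sum>v\<in>V. of_bool (v\<in>N1) + of_bool (v\<in>N2) + of_bool (v\<in>N3) + of_bool (v\<in>N4) + of_bool (v\<in>N5) + of_bool (v\<in>N6))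
        \<le> (\<Sum>v\<in>V. (3::real) + 3*of_bool (v\<in>G) - of_bool (v\<in>RX) - of_bool (v\<in>RY))"
      by (rule sum_mono) (use pt in blast)
    then show ?thesis by (simp add: sum.distrib sum_subtractf sum_distrib_left[symmetric] si nV)
  qed
  have cXY: "real (card X) + real (card Y) = real n"
    using card_Un_disjoint[OF finX dXY] XY nV by simp
  have finN: "finite N1" "finite N3" "finite N4" using Nsub finV by (auto intro: finite_subset)
  have finR: "finite G" "finite RX" "finite RY" using GV finV by (auto intro: finite_subset)
  have cov1: "Y \<subseteq> (N1 \<inter> Y) \<union> G \<union> RY"
  proof
    fix v assume vY: "v \<in> Y"
    show "v \<in> (N1 \<inter> Y) \<union> G \<union> RY"
    proof (cases "v \<in> K")
      case True
      then have "v = y \<or> v = y'" using vY xX x'X dXY by (auto simp: K_def)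
      then show ?thesis using mem vY by auto
    next
      case False then show ?thesis using vY XY by (auto simp: RY_def)
    qed
  qed
  have b1: "real (card Y) \<le> real (card (N1 \<inter> Y)) + real (card G) + real (card RY)"
  proof -
    have "card Y \<le> card ((N1 \<inter> Y) \<union> G \<union> RY)"
      by (rule card_mono[OF _ cov1]) (use finN finR in auto)
    also have "\<dots> \<le> card (N1 \<inter> Y) + card G + card RY"
      by (meson add_le_mono card_Un_le le_refl order_trans)
    finally show ?thesis by linarith
  qed
  have cov3: "X \<subseteq> (N3 \<inter> X) \<union> (N4 \<inter> X) \<union> G \<union> RX"
  proof
    fix v assume vX: "v \<in> X"
    show "v \<in> (N3 \<inter> X) \<union> (N4 \<inter> X) \<union> G \<union> RX"
    proof (cases "v \<in> K")
      case True
      then have "v = x \<or> v = x'" using vX yY y'Y dXY by (auto simp: K_def)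
      then show ?thesis using mem vX by auto
    next
      case False then show ?thesis using vX XY by (auto simp: RX_def)
    qed
  qed
  have b3: "real (card X) \<le> real (card (N3 \<inter> X)) + real (card (N4 \<inter> X)) + real (card G) + real (card RX)"
  proof -
    have "card X \<le> card ((N3 \<inter> X) \<union> (N4 \<inter> X) \<union> G \<union> RX)"
      by (rule card_mono[OF _ cov3]) (use finN finR in auto)
    also have "\<dots> \<le> card (N3 \<inter> X) + card (N4 \<inter> X) + card G + card RX"
      by (meson add_le_mono card_Un_le le_refl order_trans)
    finally show ?thesis by linarith
  qed
  have cov2: "N3 \<inter> X \<inter> (N4 \<inter> X) \<subseteq> G"
  proof
    fix v assume v: "v \<in> N3 \<inter> X \<inter> (N4 \<inter> X)"
    then have "v \<notin> K" using mem yY y'Y dXY by (auto simp: K_def)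
    moreover have "v \<in> V" using v Nsub by auto
    ultimately show "v \<in> G" using v by (auto simp: G_def two_def)
  qed
  have b2: "real (card (N3 \<inter> X \<inter> (N4 \<inter> X))) \<le> real (card G)"
    using card_mono[OF finR(1) cov2] by simp
  show ?thesis
  proof (cases "real (card Zs) \<ge> \<gamma> * real n / 4")
    case True then show ?thesis by (simp add: Zs_def)
  next
    case False
    then have g: "real (card G) < \<gamma> * real n / 4" using cardG by linarith
    have gg: "0 \<le> \<gamma> * real n" using gp by simp
    have Yl: "real n/2 - 7/2*\<gamma>*real n \<le> real (card Y)" using S1 d g by linarith
    have Xl: "real n/2 - 7/2*\<gamma>*real n \<le> real (card X)" using S2 d g by linarith
    have R: "real (card RX) + real (card RY) \<le> 6*\<gamma>*real n + 3*real (card G)" using S3 d by linarith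
    have t1: "real (card Y) - 9*\<gamma>*real n \<le> real (card (N1 \<inter> Y))" using b1 R g gg by linarith
    have t3: "real (card X) - 9*\<gamma>*real n \<le> real (card (N3 \<inter> X)) + real (card (N4 \<inter> X))"
      using b3 R g gg by linarith
    have t2: "real (card (N3 \<inter> X \<inter> (N4 \<inter> X))) \<le> 9*\<gamma>*real n" using b2 g gg by linarith
    have "typical V E (9*\<gamma>) X Y x x' y"
      using t1 t2 t3 xX x'X yY nV
      by (simp add: typical_def deg_in_def N1_def N3_def N4_def mult.assoc)
    moreover have "(1/2 - 4*\<gamma>) * real n \<le> real (card X) \<and> real (card X) \<le> (1/2 + 4*\<gamma>) * real n \<and>
        (1/2 - 4*\<gamma>) * real n \<le> real (card Y) \<and> real (card Y) \<le> (1/2 + 4*\<gamma>) * real n"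
      using Xl Yl cXY gg by (simp add: algebra_simps)
    ultimately show ?thesis by blast
  qed
qed
end
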